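(* Let $A$ be a block tridiagonal matrix satisfying the standing hypotheses (H), write $A^{-1}=[Z_{ij}]$ with $Z_{ij}\in\mathbb{C}^{m\times m}$, and let $\tau_{i,t},\omega_{i,t}$ be as in the context. Then for each $t=1,\dots,n-1$: $$\|Z_{ij}\|\le\|Z_{jj}\|\prod_{k=i}^{j-1}\tau_{k,t}\quad\text{for all } i<j,\qquad \|Z_{ij}\|\le\|Z_{jj}\|\prod_{k=j+1}^{i}\omega_{k,t}\quad\text{for all } i>j,$$ and for $i=1,\dots,n$, $$\frac{\|I\|}{\|A_i\|+\tau_{i-1,t}\|C_{i-1}\|+\omega_{i+1,t}\|B_i\|}\le\|Z_{ii}\|,$$ and, whenever $\|A_i^{-1}\|^{-1}-\tau_{i-1,t}\|C_{i-1}\|-\omega_{i+1,t}\|B_i\|>0$, $$\|Z_{ii}\|\le\frac{\|I\|}{\|A_i^{-1}\|^{-1}-\tau_{i-1,t}\|C_{i-1}\|-\omega_{i+1,t}\|B_i\|},$$ where $C_0=B_n=0$ and $\tau_{0,t}=\omega_{n+1,t}=0$.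
   Context: $\|\cdot\|$ is a submultiplicative matrix norm on $\mathbb{C}^{m\times m}$, $n\ge 2$, and $A$ is block tridiagonal with diagonal blocks $A_1,\dots,A_n$, superdiagonal blocks $B_1,\dots,B_{n-1}$ (block $(i,i+1)$) and subdiagonal blocks $C_1,\dots,C_{n-1}$ (block $(i+1,i)$), all in $\mathbb{C}^{m\times m}$; set $C_0=B_n=0$. Standing hypotheses (H): $A$ is nonsingular; $B_i$ and $C_i$ are nonsingular for $i=1,\dots,n-1$; every $A_i$ is nonsingular and $\|A_i^{-1}C_{i-1}\|+\|A_i^{-1}B_i\|\le 1$ for $i=1,\dots,n$ (row block diagonal dominance); and $\|A_1^{-1}B_1\|<1$, $\|A_n^{-1}C_{n-1}\|<1$. For $i=1,\dots,n$: $\tau_i=\dfrac{\|A_i^{-1}B_i\|}{1-\|A_i^{-1}C_{i-1}\|}$, $\omega_i=\dfrac{\|A_i^{-1}C_{i-1}\|}{1-\|A_i^{-1}B_i\|}$. For $i=1,\dots,n$ and $t=1,\dots,n-1$ define recursively in $t$: $\tau_{i,t}=\tau_i$ if $t=1$; $\tau_{i,t}=\tau_{i,t-1}$ if $t>i$; otherwise $\tau_{i,t}=\dfrac{\|A_i^{-1}B_i\|}{1-\|A_i^{-1}C_{i-1}\|\,\tau_{i-1,t-1}}$. $\omega_{i,t}=\omega_i$ if $t=1$; $\omega_{i,t}=\omega_{i,t-1}$ if $n-t+1<i$; otherwise $\omega_{i,t}=\dfrac{\|A_i^{-1}C_{i-1}\|}{1-\|A_i^{-1}B_i\|\,\omega_{i+1,t-1}}$.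 *)

theory Defs
  imports "HOL-Analysis.Analysis"
begin

type_synonym 'm cmat = "complex ^ 'm ^ 'm"

definition submult_matrix_norm :: "('m::finite cmat \<Rightarrow> real) \<Rightarrow> bool" where
  "submult_matrix_norm N \<longleftrightarrow>
     (\<forall>X. 0 \<le> N X) \<and> (\<forall>X. N X = 0 \<longleftrightarrow> X = 0) \<and>
     (\<forall>c X. N (\<chi> i j. c * X $ i $ j) = cmod c * N X) \<and>
     (\<forall>X Y. N (X + Y) \<le> N X + N Y) \<and>
     (\<forall>X Y. N (X ** Y) \<le> N X * N Y)"

definition tridiag_block ::
  "(nat \<Rightarrow> 'm::finite cmat) \<Rightarrow> (nat \<Rightarrow> 'm cmat) \<Rightarrow> (nat \<Rightarrow> 'm cmat) \<Rightarrow> nat \<Rightarrow> nat \<Rightarrow> 'm cmat" where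
  "tridiag_block Ad B C i j =
     (if i = j then Ad i else if j = i + 1 then B i else if i = j + 1 then C j else 0)"

definition is_block_inverse ::
  "nat \<Rightarrow> (nat \<Rightarrow> nat \<Rightarrow> 'm::finite cmat) \<Rightarrow> (nat \<Rightarrow> nat \<Rightarrow> 'm cmat) \<Rightarrow> bool" where
  "is_block_inverse n M Z \<longleftrightarrow>
     (\<forall>i\<in>{1..n}. \<forall>j\<in>{1..n}.
        (\<Sum>k=1..n. M i k ** Z k j) = (if i = j then mat 1 else 0) \<and>
        (\<Sum>k=1..n. Z i k ** M k j) = (if i = j then mat 1 else 0))"

fun tau_it ::
  "('m::finite cmat \<Rightarrow> real) \<Rightarrow> (nat \<Rightarrow> 'm cmat) \<Rightarrow> (nat \<Rightarrow> 'm cmat) \<Rightarrow> (nat \<Rightarrow> 'm cmat)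
   \<Rightarrow> nat \<Rightarrow> nat \<Rightarrow> real" where
  "tau_it N Ad B C i 0 = 0"
| "tau_it N Ad B C i (Suc t) =
     (if t = 0 then
        N (matrix_inv (Ad i) ** B i) / (1 - N (matrix_inv (Ad i) ** C (i - 1)))
      else if Suc t > i then tau_it N Ad B C i t
      else N (matrix_inv (Ad i) ** B i) /
             (1 - N (matrix_inv (Ad i) ** C (i - 1)) * tau_it N Ad B C (i - 1) t))"

fun omega_it ::
  "nat \<Rightarrow> ('m::finite cmat \<Rightarrow> real) \<Rightarrow> (nat \<Rightarrow> 'm cmat) \<Rightarrow> (nat \<Rightarrow> 'm cmat) \<Rightarrow> (nat \<Rightarrow> 'm cmat)
   \<Rightarrow> nat \<Rightarrow> nat \<Rightarrow> real" where
  "omega_it n N Ad B C i 0 = 0"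
| "omega_it n N Ad B C i (Suc t) =
     (if t = 0 then
        N (matrix_inv (Ad i) ** C (i - 1)) / (1 - N (matrix_inv (Ad i) ** B i))
      else if n - Suc t + 1 < i then omega_it n N Ad B C i t
      else N (matrix_inv (Ad i) ** C (i - 1)) /
             (1 - N (matrix_inv (Ad i) ** B i) * omega_it n N Ad B C (i + 1) t))"

end

theory Submission
  imports Defs
begin

lemma matrix_inv_both:
  fixes A :: "'a::semiring_1^'n^'n"
  assumes "invertible A" shows "A ** matrix_inv A = mat 1 \<and> matrix_inv A ** A = mat 1"
  using assms unfolding invertible_def matrix_inv_def by (rule someI_ex)

lemma matrix_inv_left:
  fixes A :: "'a::semiring_1^'n^'n"
  assumes "invertible A" shows "matrix_inv A ** A = mat 1"
  using matrix_inv_both[OF assms] by simp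

lemma invertible_matrix_inv:
  fixes A :: "'a::semiring_1^'n^'n"
  assumes "invertible A" shows "invertible (matrix_inv A)"
  using matrix_inv_both[OF assms] unfolding invertible_def by blast

lemma mmul_0l [simp]: "(0::'a::semiring_1^'n^'m) ** X = 0"
  by (simp add: matrix_matrix_mult_def vec_eq_iff)
lemma mmul_0r [simp]: "X ** (0::'a::semiring_1^'n^'m) = 0"
  by (simp add: matrix_matrix_mult_def vec_eq_iff)
lemma mmul_diff: "(A::'a::ring_1^'n^'m) ** (X - Y) = A ** X - A ** Y"
  by (simp add: matrix_matrix_mult_def vec_eq_iff sum_subtractf algebra_simps)
lemma mmul_neg: "(A::'a::ring_1^'n^'m) ** (- X) = - (A ** X)"
  by (simp add: matrix_matrix_mult_def vec_eq_iff sum_negf)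

lemma aux_bound:
  fixes a b tp z x y :: real
  assumes "0 \<le> a" "a * tp < 1" "z \<le> a * y + b * x" "y \<le> tp * z"
  shows "z \<le> b / (1 - a * tp) * x"
proof -
  have "a * y \<le> a * (tp * z)" using assms by (simp add: mult_left_mono)
  then have "(1 - a * tp) * z \<le> b * x" using assms(3) by (simp add: algebra_simps)
  moreover have "0 < 1 - a * tp" using assms by simp
  ultimately show ?thesis by (simp add: field_simps mult.commute)
qed

lemma aux_range:
  fixes a b tp :: real
  assumes "0 \<le> a" "0 \<le> b" "a + b \<le> 1" "a < 1" "0 \<le> tp" "tp \<le> 1"
  shows "0 \<le> b / (1 - a * tp) \<and> b / (1 - a * tp) \<le> 1 \<and> a * tp < 1"
proof -
  have "a * tp \<le> a" using assms by (simp add: mult_left_le)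
  then have p: "b \<le> 1 - a * tp" "a * tp < 1" using assms by auto
  then show ?thesis using assms by (simp add: divide_le_eq_1)
qed

lemma aux_up:
  fixes q z c s :: real
  assumes "0 < q" "z \<le> q * (c + s * z)" "0 < 1/q - s"
  shows "z \<le> c / (1/q - s)"
proof -
  have "z / q \<le> c + s * z" using assms by (simp add: pos_divide_le_eq mult.commute)
  then have "(1/q - s) * z \<le> c" by (simp add: algebra_simps)
  then show ?thesis using assms(3) by (simp add: pos_le_divide_eq mult.commute)
qed

locale tri =
  fixes N :: "'m::finite cmat \<Rightarrow> real"
    and n :: nat
    and Ad B C :: "nat \<Rightarrow> 'm cmat"
    and Z :: "nat \<Rightarrow> nat \<Rightarrow> 'm cmat"
  assumes norm: "submult_matrix_norm N"
    and n2: "n \<ge> 2"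
    and C0: "C 0 = 0" and Bn: "B n = 0"
    and Zinv: "is_block_inverse n (tridiag_block Ad B C) Z"
    and BC_inv: "\<And>i. 1 \<le> i \<Longrightarrow> i \<le> n - 1 \<Longrightarrow> invertible (B i) \<and> invertible (C i)"
    and A_inv: "\<And>i. 1 \<le> i \<Longrightarrow> i \<le> n \<Longrightarrow> invertible (Ad i)"
    and dd: "\<And>i. 1 \<le> i \<Longrightarrow> i \<le> n \<Longrightarrow>
               N (matrix_inv (Ad i) ** C (i - 1)) + N (matrix_inv (Ad i) ** B i) \<le> 1"
    and first: "N (matrix_inv (Ad 1) ** B 1) < 1"
    and last: "N (matrix_inv (Ad n) ** C (n - 1)) < 1"
begin

lemma Nnn: "0 \<le> N X" using norm unfolding submult_matrix_norm_def by auto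
lemma N0: "N 0 = 0" using norm unfolding submult_matrix_norm_def by auto
lemma Npos: "X \<noteq> 0 \<Longrightarrow> 0 < N X" using norm unfolding submult_matrix_norm_def
  by (metis order_le_less)
lemma Ntri: "N (X + Y) \<le> N X + N Y" using norm unfolding submult_matrix_norm_def by auto
lemma Nmul: "N (X ** Y) \<le> N X * N Y" using norm unfolding submult_matrix_norm_def by auto
lemma Nneg: "N (- X) = N X"
proof -
  have "- X = (\<chi> i j. (-1) * X $ i $ j)" by (simp add: vec_eq_iff)
  moreover have "N (\<chi> i j. (-1) * X $ i $ j) = cmod (-1) * N X"
    using norm unfolding submult_matrix_norm_def by blast
  ultimately show ?thesis by simp
qed
lemma Nsub: "N (X - Y) \<le> N X + N Y"
  using Ntri[of X "-Y"] Nneg[of Y] by simp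

lemma inv_nonzero: "invertible (X::'m cmat) \<Longrightarrow> X \<noteq> 0"
proof
  assume "invertible X" "X = 0"
  then have "(mat 1 :: 'm cmat) = 0" unfolding invertible_def by auto
  then have "(mat 1 :: 'm cmat) $ undefined $ undefined = 0" by simp
  then show False by (simp add: mat_def)
qed

definition "a i = N (matrix_inv (Ad i) ** C (i - 1))"
definition "b i = N (matrix_inv (Ad i) ** B i)"

lemma a_nn: "0 \<le> a i" unfolding a_def by (rule Nnn)
lemma b_nn: "0 \<le> b i" unfolding b_def by (rule Nnn)
lemma a1: "a 1 = 0" unfolding a_def using C0 N0 by simp
lemma bn: "b n = 0" unfolding b_def using Bn N0 by simp
lemma ab: "1 \<le> i \<Longrightarrow> i \<le> n \<Longrightarrow> a i + b i \<le> 1" unfolding a_def b_def by (rule dd)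

lemma a_lt: assumes "1 \<le> i" "i \<le> n" shows "a i < 1"
proof (cases "i = n")
  case True then show ?thesis using last unfolding a_def by simp
next
  case False
  then have "invertible (matrix_inv (Ad i) ** B i)"
  proof -
    have "i \<le> n - 1" using assms False by arith
    then show ?thesis using assms BC_inv[of i] A_inv[of i] invertible_mult invertible_matrix_inv by blast
  qed
  then have "0 < b i" unfolding b_def using inv_nonzero Npos by blast
  then show ?thesis using ab[OF assms] by simp
qed

lemma b_lt: assumes "1 \<le> i" "i \<le> n" shows "b i < 1"
proof (cases "i = 1")
  case True then show ?thesis using first unfolding b_def by simp
next
  case False
  then have "invertible (matrix_inv (Ad i) ** C (i - 1))"
  proof -
    have "1 \<le> i - 1" "i - 1 \<le> n - 1" using assms False by arith+
    then show ?thesis using assms BC_inv[of "i - 1"] A_inv[of i] invertible_mult invertible_matrix_inv by blast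
  qed
  then have "0 < a i" unfolding a_def using inv_nonzero Npos by blast
  then show ?thesis using ab[OF assms] by simp
qed

lemma row:
  assumes "1 \<le> i" "i \<le> n" "1 \<le> j" "j \<le> n"
  shows "C (i-1) ** Z (i-1) j + Ad i ** Z i j + B i ** Z (i+1) j = (if i = j then mat 1 else 0)"
proof -
  have S: "(\<Sum>k=1..n. tridiag_block Ad B C i k ** Z k j) = (if i = j then mat 1 else 0)"
    using Zinv assms unfolding is_block_inverse_def by auto
  have "(\<Sum>k=1..n. tridiag_block Ad B C i k ** Z k j) =
     (\<Sum>k=1..n. (if k = i then Ad i ** Z i j else 0) + (if k = i+1 then B i ** Z (i+1) j else 0)
        + (if k = i - 1 then C (i-1) ** Z (i-1) j else 0))"
  proof (rule sum.cong)
    fix k assume "k \<in> {1..n}"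
    then show "tridiag_block Ad B C i k ** Z k j = (if k = i then Ad i ** Z i j else 0) + (if k = i+1 then B i ** Z (i+1) j else 0)
        + (if k = i - 1 then C (i-1) ** Z (i-1) j else 0)"
      using assms by (auto simp: tridiag_block_def )
  qed simp
  also have "\<dots> = (if i \<in> {1..n} then Ad i ** Z i j else 0) + (if i+1 \<in> {1..n} then B i ** Z (i+1) j else 0)
        + (if i - 1 \<in> {1..n} then C (i-1) ** Z (i-1) j else 0)"
    by (simp add: sum.distrib)
  also have "\<dots> = C (i-1) ** Z (i-1) j + Ad i ** Z i j + B i ** Z (i+1) j"
    using assms C0 Bn by (cases "i = n"; cases "i = 1"; auto simp: add_ac)
  finally show ?thesis using S by simp
qed

lemma offdiag:
  assumes "1 \<le> i" "i \<le> n" "1 \<le> j" "j \<le> n" "i \<noteq> j"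
  shows "N (Z i j) \<le> a i * N (Z (i-1) j) + b i * N (Z (i+1) j)"
proof -
  let ?A = "matrix_inv (Ad i)"
  have R: "C (i-1) ** Z (i-1) j + Ad i ** Z i j + B i ** Z (i+1) j = 0"
    using row[OF assms(1-4)] assms(5) by simp
  have e1: "Ad i ** Z i j = 0 - C(i-1) ** Z(i-1) j - B i ** Z(i+1) j"
    using R by (simp add: algebra_simps eq_neg_iff_add_eq_0)
  have e2: "Z i j = ?A ** (Ad i ** Z i j)"
    using A_inv[OF assms(1,2)] by (simp add: matrix_mul_assoc matrix_inv_left)
  have e3: "Z i j = (0 - (?A ** C (i-1)) ** Z (i-1) j) - (?A ** B i) ** Z (i+1) j"
    using e2 unfolding e1 by (simp add: mmul_diff mmul_neg matrix_mul_assoc)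
  have "N (Z i j) \<le> N (0 - (?A ** C (i-1)) ** Z (i-1) j) + N ((?A ** B i) ** Z (i+1) j)"
    using e3 Nsub by metis
  also have "N (0 - (?A ** C (i-1)) ** Z (i-1) j) = N ((?A ** C (i-1)) ** Z (i-1) j)"
    using Nneg by simp
  also have "\<dots> \<le> a i * N (Z (i-1) j)" unfolding a_def by (rule Nmul)
  also have "N ((?A ** B i) ** Z (i+1) j) \<le> b i * N (Z (i+1) j)" unfolding b_def by (rule Nmul)
  finally show ?thesis by simp
qed

lemma diag_lower:
  assumes "1 \<le> i" "i \<le> n"
  shows "N (mat 1) \<le> N (C (i-1)) * N (Z (i-1) i) + N (Ad i) * N (Z i i) + N (B i) * N (Z (i+1) i)"
proof -
  have R: "C (i-1) ** Z (i-1) i + Ad i ** Z i i + B i ** Z (i+1) i = mat 1"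
    using row[OF assms assms] by simp
  have "N (mat 1) \<le> N (C (i-1) ** Z (i-1) i + Ad i ** Z i i) + N (B i ** Z (i+1) i)"
    using Ntri R by metis
  also have "\<dots> \<le> N (C (i-1) ** Z (i-1) i) + N (Ad i ** Z i i) + N (B i ** Z (i+1) i)"
    using Ntri by simp
  also have "\<dots> \<le> N (C (i-1)) * N (Z (i-1) i) + N (Ad i) * N (Z i i) + N (B i) * N (Z (i+1) i)"
    using Nmul add_mono by metis
  finally show ?thesis .
qed

lemma diag_upper:
  assumes "1 \<le> i" "i \<le> n"
  shows "N (Z i i) \<le> N (matrix_inv (Ad i)) * (N (mat 1) + N (C (i-1)) * N (Z (i-1) i) + N (B i) * N (Z (i+1) i))"
proof -
  let ?A = "matrix_inv (Ad i)"
  have R: "C (i-1) ** Z (i-1) i + Ad i ** Z i i + B i ** Z (i+1) i = mat 1"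
    using row[OF assms assms] by simp
  have e1: "Ad i ** Z i i = mat 1 - C(i-1) ** Z(i-1) i - B i ** Z(i+1) i"
    using R by (simp add: algebra_simps)
  have e2: "Z i i = ?A ** (Ad i ** Z i i)"
    using A_inv[OF assms(1,2)] by (simp add: matrix_mul_assoc matrix_inv_left)
  have "N (Z i i) \<le> N ?A * N (mat 1 - C(i-1) ** Z(i-1) i - B i ** Z(i+1) i)"
    using e2 e1 Nmul by metis
  also have "N (mat 1 - C(i-1) ** Z(i-1) i - B i ** Z(i+1) i) \<le> N (mat 1) + N (C (i-1)) * N (Z (i-1) i) + N (B i) * N (Z (i+1) i)"
  proof -
    have "N (mat 1 - C(i-1) ** Z(i-1) i - B i ** Z(i+1) i) \<le> N (mat 1 - C(i-1) ** Z(i-1) i) + N (B i ** Z(i+1) i)"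
      by (rule Nsub)
    also have "\<dots> \<le> N (mat 1) + N (C(i-1) ** Z(i-1) i) + N (B i ** Z(i+1) i)"
      using Nsub by simp
    also have "\<dots> \<le> N (mat 1) + N (C (i-1)) * N (Z (i-1) i) + N (B i) * N (Z (i+1) i)"
      using Nmul add_mono by (metis add_left_mono)
    finally show ?thesis .
  qed
  then have "N ?A * N (mat 1 - C(i-1) ** Z(i-1) i - B i ** Z(i+1) i) \<le> N ?A * (N (mat 1) + N (C (i-1)) * N (Z (i-1) i) + N (B i) * N (Z (i+1) i))"
    using Nnn by (simp add: mult_left_mono)
  finally show ?thesis .
qed

lemma tau_Suc: "tau_it N Ad B C i (Suc t) = (if t = 0 then b i / (1 - a i) else if Suc t > i then tau_it N Ad B C i t
    else b i / (1 - a i * tau_it N Ad B C (i-1) t))"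
  by (simp add: a_def b_def)

lemma omega_Suc: "omega_it n N Ad B C i (Suc t) = (if t = 0 then a i / (1 - b i) else if n - Suc t + 1 < i then omega_it n N Ad B C i t
    else a i / (1 - b i * omega_it n N Ad B C (i+1) t))"
  by (simp add: a_def b_def)

lemma tau_main:
  "1 \<le> t \<Longrightarrow> 1 \<le> i \<Longrightarrow> i \<le> n - 1 \<Longrightarrow> 0 \<le> tau_it N Ad B C i t \<and> tau_it N Ad B C i t \<le> 1 \<and>
     (\<forall>j. i < j \<and> j \<le> n \<longrightarrow> N (Z i j) \<le> tau_it N Ad B C i t * N (Z (i+1) j))"
proof (induction t arbitrary: i)
  case 0 then show ?case by simp
next
  case (Suc t)
  show ?case
  proof (cases "t = 0")
    case True
    have "0 \<le> b i / (1 - a i) \<and> b i / (1 - a i) \<le> 1 \<and>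
     (\<forall>j. i < j \<and> j \<le> n \<longrightarrow> N (Z i j) \<le> b i / (1 - a i) * N (Z (i+1) j))"
      using Suc.prems(2,3)
    proof (induction i rule: less_induct)
      case (less i)
      have ii: "1 \<le> i" "i \<le> n" using less.prems n2 by auto
      have R: "0 \<le> b i / (1 - a i) \<and> b i / (1 - a i) \<le> 1"
        using aux_range[of "a i" "b i" 1] a_nn b_nn ab[OF ii] a_lt[OF ii] by simp
      show ?case
      proof (cases "i = 1")
        case True
        show ?thesis using R
        proof (intro conjI allI impI; (elim conjE)?)
          fix j assume j: "i < j" "j \<le> n"
          have "N (Z i j) \<le> a i * N (Z (i-1) j) + b i * N (Z (i+1) j)"
            using offdiag[of i j] ii j by simp
          then show "N (Z i j) \<le> b i / (1 - a i) * N (Z (i + 1) j)" using True a1 by simp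
        qed simp_all
      next
        case False
        then have i2: "1 \<le> i - 1" "i - 1 \<le> n - 1" "i - 1 < i" using ii by auto
        have IH: "0 \<le> b (i-1) / (1 - a (i-1)) \<and> b (i-1) / (1 - a (i-1)) \<le> 1 \<and>
          (\<forall>j. i - 1 < j \<and> j \<le> n \<longrightarrow> N (Z (i-1) j) \<le> b (i-1) / (1 - a (i-1)) * N (Z (i - 1 + 1) j))"
          using less.IH[OF i2(3) i2(1) i2(2)] .
        show ?thesis using R
        proof (intro conjI allI impI; (elim conjE)?)
          fix j assume j: "i < j" "j \<le> n"
          have 1: "N (Z i j) \<le> a i * N (Z (i-1) j) + b i * N (Z (i+1) j)"
            using offdiag[of i j] ii j by simp
          have "N (Z (i-1) j) \<le> b (i-1) / (1 - a (i-1)) * N (Z i j)" using IH j ii by simp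
          also have "\<dots> \<le> 1 * N (Z i j)" using IH Nnn by (intro mult_right_mono) auto
          finally have 2: "N (Z (i-1) j) \<le> 1 * N (Z i j)" .
          show "N (Z i j) \<le> b i / (1 - a i) * N (Z (i + 1) j)"
            using aux_bound[OF a_nn _ 1 2] a_lt[OF ii] by simp
        qed simp_all
      qed
    qed
    then show ?thesis using True by (simp add: tau_Suc del: tau_it.simps)
  next
    case False
    show ?thesis
    proof (cases "Suc t > i")
      case True
      then show ?thesis using Suc.IH[of i] Suc.prems False by (simp add: tau_Suc del: tau_it.simps)
    next
      case nle: False
      have ii: "1 \<le> i" "i \<le> n" using Suc.prems n2 by auto
      have i2: "1 \<le> i - 1" "i - 1 \<le> n - 1" using nle False Suc.prems by auto
      let ?tp = "tau_it N Ad B C (i-1) t"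
      have IH: "0 \<le> ?tp \<and> ?tp \<le> 1 \<and> (\<forall>j. i - 1 < j \<and> j \<le> n \<longrightarrow> N (Z (i-1) j) \<le> ?tp * N (Z (i - 1 + 1) j))"
        using Suc.IH[OF _ i2] False by simp
      have R: "0 \<le> b i / (1 - a i * ?tp) \<and> b i / (1 - a i * ?tp) \<le> 1 \<and> a i * ?tp < 1"
        using aux_range[of "a i" "b i" ?tp] a_nn b_nn ab[OF ii] a_lt[OF ii] IH by simp
      have tv: "tau_it N Ad B C i (Suc t) = b i / (1 - a i * ?tp)" using nle False by (simp add: tau_Suc del: tau_it.simps)
      show ?thesis unfolding tv using R
      proof (intro conjI allI impI; (elim conjE)?)
        fix j assume j: "i < j" "j \<le> n"
        have 1: "N (Z i j) \<le> a i * N (Z (i-1) j) + b i * N (Z (i+1) j)"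
          using offdiag[of i j] ii j by simp
        have 2: "N (Z (i-1) j) \<le> ?tp * N (Z i j)" using IH j ii by simp
        show "N (Z i j) \<le> b i / (1 - a i * ?tp) * N (Z (i + 1) j)"
          using aux_bound[OF a_nn _ 1 2] R by simp
      qed simp_all
    qed
  qed
qed

lemma omega_main:
  "1 \<le> t \<Longrightarrow> t \<le> n - 1 \<Longrightarrow> 2 \<le> i \<Longrightarrow> i \<le> n \<Longrightarrow> 0 \<le> omega_it n N Ad B C i t \<and> omega_it n N Ad B C i t \<le> 1 \<and>
     (\<forall>j. 1 \<le> j \<and> j < i \<longrightarrow> N (Z i j) \<le> omega_it n N Ad B C i t * N (Z (i-1) j))"
proof (induction t arbitrary: i)
  case 0 then show ?case by simp
next
  case (Suc t)
  show ?case
  proof (cases "t = 0")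
    case True
    have "0 \<le> a i / (1 - b i) \<and> a i / (1 - b i) \<le> 1 \<and>
     (\<forall>j. 1 \<le> j \<and> j < i \<longrightarrow> N (Z i j) \<le> a i / (1 - b i) * N (Z (i-1) j))"
      using Suc.prems(3,4)
    proof (induction "n - i" arbitrary: i rule: less_induct)
      case (less i)
      have ii: "1 \<le> i" "i \<le> n" using less.prems n2 by auto
      have R: "0 \<le> a i / (1 - b i) \<and> a i / (1 - b i) \<le> 1"
        using aux_range[of "b i" "a i" 1] a_nn b_nn ab[OF ii] b_lt[OF ii] by (simp add: add.commute)
      show ?case
      proof (cases "i = n")
        case True
        show ?thesis using R
        proof (intro conjI allI impI; (elim conjE)?)
          fix j assume j: "1 \<le> j" "j < i"
          have "N (Z i j) \<le> a i * N (Z (i-1) j) + b i * N (Z (i+1) j)"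
            using offdiag[of i j] ii j by simp
          then show "N (Z i j) \<le> a i / (1 - b i) * N (Z (i - 1) j)" using True bn by simp
        qed simp_all
      next
        case False
        then have i2: "2 \<le> i + 1" "i + 1 \<le> n" "n - (i + 1) < n - i" using ii less.prems by auto
        have IH: "0 \<le> a (i+1) / (1 - b (i+1)) \<and> a (i+1) / (1 - b (i+1)) \<le> 1 \<and>
          (\<forall>j. 1 \<le> j \<and> j < i + 1 \<longrightarrow> N (Z (i+1) j) \<le> a (i+1) / (1 - b (i+1)) * N (Z (i + 1 - 1) j))"
          using less.hyps[OF i2(3) i2(1) i2(2)] .
        show ?thesis using R
        proof (intro conjI allI impI; (elim conjE)?)
          fix j assume j: "1 \<le> j" "j < i"
          have 1: "N (Z i j) \<le> b i * N (Z (i+1) j) + a i * N (Z (i-1) j)"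
            using offdiag[of i j] ii j by (simp add: add.commute)
          have "N (Z (i+1) j) \<le> a (i+1) / (1 - b (i+1)) * N (Z i j)" using IH j ii by simp
          also have "\<dots> \<le> 1 * N (Z i j)" using IH Nnn by (intro mult_right_mono) auto
          finally have 2: "N (Z (i+1) j) \<le> 1 * N (Z i j)" .
          show "N (Z i j) \<le> a i / (1 - b i) * N (Z (i - 1) j)"
            using aux_bound[OF b_nn _ 1 2] b_lt[OF ii] by simp
        qed simp_all
      qed
    qed
    then show ?thesis using True by (simp add: omega_Suc del: omega_it.simps)
  next
    case False
    show ?thesis
    proof (cases "n - Suc t + 1 < i")
      case True
      then show ?thesis using Suc.IH[of i] Suc.prems False by (simp add: omega_Suc del: omega_it.simps)
    next
      case nle: False
      have ii: "1 \<le> i" "i \<le> n" using Suc.prems n2 by auto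
      have i2: "2 \<le> i + 1" "i + 1 \<le> n" using nle False Suc.prems by auto
      let ?tp = "omega_it n N Ad B C (i+1) t"
      have IH: "0 \<le> ?tp \<and> ?tp \<le> 1 \<and> (\<forall>j. 1 \<le> j \<and> j < i + 1 \<longrightarrow> N (Z (i+1) j) \<le> ?tp * N (Z (i + 1 - 1) j))"
        using Suc.IH[OF _ _ i2] False Suc.prems by simp
      have R: "0 \<le> a i / (1 - b i * ?tp) \<and> a i / (1 - b i * ?tp) \<le> 1 \<and> b i * ?tp < 1"
        using aux_range[of "b i" "a i" ?tp] a_nn b_nn ab[OF ii] b_lt[OF ii] IH by (simp add: add.commute)
      have tv: "omega_it n N Ad B C i (Suc t) = a i / (1 - b i * ?tp)" using nle False
        by (simp add: omega_Suc del: omega_it.simps)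
      show ?thesis unfolding tv using R
      proof (intro conjI allI impI; (elim conjE)?)
        fix j assume j: "1 \<le> j" "j < i"
        have 1: "N (Z i j) \<le> b i * N (Z (i+1) j) + a i * N (Z (i-1) j)"
          using offdiag[of i j] ii j by (simp add: add.commute)
        have 2: "N (Z (i+1) j) \<le> ?tp * N (Z i j)" using IH j ii by simp
        show "N (Z i j) \<le> a i / (1 - b i * ?tp) * N (Z (i - 1) j)"
          using aux_bound[OF b_nn _ 1 2] R by simp
      qed simp_all
    qed
  qed
qed

lemma prod_up: "1 \<le> t \<Longrightarrow> 1 \<le> i \<Longrightarrow> i < j \<Longrightarrow> j \<le> n \<Longrightarrow>
    N (Z i j) \<le> N (Z j j) * (\<Prod>k=i..j-1. tau_it N Ad B C k t)"
proof (induction "j - i" arbitrary: i rule: less_induct)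
  case (less i)
  have T: "0 \<le> tau_it N Ad B C i t" "N (Z i j) \<le> tau_it N Ad B C i t * N (Z (i+1) j)"
    using tau_main[of t i] less.prems by auto
  show ?case
  proof (cases "i + 1 = j")
    case True
    then show ?thesis using T by (simp add: mult.commute True[symmetric])
  next
    case False
    have IH: "N (Z (i+1) j) \<le> N (Z j j) * (\<Prod>k=i+1..j-1. tau_it N Ad B C k t)"
      using less.hyps[of "i+1"] less.prems False by auto
    have P: "(\<Prod>k=i..j-1. tau_it N Ad B C k t) = tau_it N Ad B C i t * (\<Prod>k=i+1..j-1. tau_it N Ad B C k t)"
      using less.prems by (simp add: prod.atLeast_Suc_atMost)
    have "N (Z i j) \<le> tau_it N Ad B C i t * (N (Z j j) * (\<Prod>k=i+1..j-1. tau_it N Ad B C k t))"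
      using T IH order_trans mult_left_mono by blast
    then show ?thesis unfolding P by (simp add: ac_simps)
  qed
qed

lemma prod_down: "1 \<le> t \<Longrightarrow> t \<le> n - 1 \<Longrightarrow> 1 \<le> j \<Longrightarrow> j < i \<Longrightarrow> i \<le> n \<Longrightarrow>
    N (Z i j) \<le> N (Z j j) * (\<Prod>k=j+1..i. omega_it n N Ad B C k t)"
proof (induction "i - j" arbitrary: i rule: less_induct)
  case (less i)
  have T: "0 \<le> omega_it n N Ad B C i t" "N (Z i j) \<le> omega_it n N Ad B C i t * N (Z (i-1) j)"
    using omega_main[of t i] less.prems by auto
  obtain m where m: "i = Suc m" using less.prems by (cases i) auto
  show ?case
  proof (cases "j + 1 = i")
    case True
    then show ?thesis using T by (simp add: mult.commute True[symmetric])
  next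
    case False
    have IH: "N (Z (i-1) j) \<le> N (Z j j) * (\<Prod>k=j+1..i-1. omega_it n N Ad B C k t)"
      using less.hyps[of "i-1"] less.prems False by auto
    have P: "(\<Prod>k=j+1..i. omega_it n N Ad B C k t) = omega_it n N Ad B C i t * (\<Prod>k=j+1..i-1. omega_it n N Ad B C k t)"
      using less.prems unfolding m by (simp add: prod.nat_ivl_Suc')
    have "N (Z i j) \<le> omega_it n N Ad B C i t * (N (Z j j) * (\<Prod>k=j+1..i-1. omega_it n N Ad B C k t))"
      using T IH order_trans mult_left_mono by blast
    then show ?thesis unfolding P by (simp add: ac_simps)
  qed
qed

lemma diag_bounds:
  assumes t: "1 \<le> t" "t \<le> n - 1" and ii: "1 \<le> i" "i \<le> n"
  shows "(let tp = (if i = 1 then 0 else tau_it N Ad B C (i - 1) t);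
                 om = (if i = n then 0 else omega_it n N Ad B C (i + 1) t)
             in N (mat 1) / (N (Ad i) + tp * N (C (i - 1)) + om * N (B i)) \<le> N (Z i i)
              \<and> (1 / N (matrix_inv (Ad i)) - tp * N (C (i - 1)) - om * N (B i) > 0 \<longrightarrow>
                  N (Z i i) \<le> N (mat 1) /
                     (1 / N (matrix_inv (Ad i)) - tp * N (C (i - 1)) - om * N (B i))))"
proof -
  define tp where "tp = (if i = 1 then 0 else tau_it N Ad B C (i - 1) t)"
  define om where "om = (if i = n then 0 else omega_it n N Ad B C (i + 1) t)"
  have tp: "0 \<le> tp" "N (C (i-1)) * N (Z (i-1) i) \<le> tp * N (C (i-1)) * N (Z i i)"
  proof -
    show "0 \<le> tp" unfolding tp_def using tau_main[of t "i-1"] t ii by auto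
    show "N (C (i-1)) * N (Z (i-1) i) \<le> tp * N (C (i-1)) * N (Z i i)"
    proof (cases "i = 1")
      case True then show ?thesis using C0 N0 by simp
    next
      case False
      then have "N (Z (i-1) i) \<le> tp * N (Z i i)" unfolding tp_def using tau_main[of t "i-1"] t ii by auto
      then show ?thesis using Nnn by (metis mult.assoc mult.commute mult_left_mono)
    qed
  qed
  have om: "0 \<le> om" "N (B i) * N (Z (i+1) i) \<le> om * N (B i) * N (Z i i)"
  proof -
    show "0 \<le> om" unfolding om_def using omega_main[of t "i+1"] t ii by auto
    show "N (B i) * N (Z (i+1) i) \<le> om * N (B i) * N (Z i i)"
    proof (cases "i = n")
      case True then show ?thesis using Bn N0 by simp
    next
      case False
      then have "N (Z (i+1) i) \<le> om * N (Z i i)" unfolding om_def using omega_main[of t "i+1"] t ii by auto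
      then show ?thesis using Nnn by (metis mult.assoc mult.commute mult_left_mono)
    qed
  qed
  have NA: "0 < N (Ad i)" using Npos inv_nonzero A_inv[OF ii] by blast
  have NAi: "0 < N (matrix_inv (Ad i))" using Npos inv_nonzero invertible_matrix_inv A_inv[OF ii] by blast
  have low: "N (mat 1) \<le> (N (Ad i) + tp * N (C (i - 1)) + om * N (B i)) * N (Z i i)"
    using diag_lower[OF ii] tp om by (simp add: algebra_simps)
  have D: "0 < N (Ad i) + tp * N (C (i - 1)) + om * N (B i)"
    using NA tp om Nnn by (simp add: add_pos_nonneg)
  have L: "N (mat 1) / (N (Ad i) + tp * N (C (i - 1)) + om * N (B i)) \<le> N (Z i i)"
    using low D by (simp add: pos_divide_le_eq mult.commute)
  have up: "N (Z i i) \<le> N (matrix_inv (Ad i)) * (N (mat 1) + (tp * N (C (i - 1)) + om * N (B i)) * N (Z i i))"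
  proof -
    have "N (Z i i) \<le> N (matrix_inv (Ad i)) * (N (mat 1) + N (C (i-1)) * N (Z (i-1) i) + N (B i) * N (Z (i+1) i))"
      by (rule diag_upper[OF ii])
    also have "\<dots> \<le> N (matrix_inv (Ad i)) * (N (mat 1) + (tp * N (C (i - 1)) + om * N (B i)) * N (Z i i))"
      using tp om NAi by (intro mult_left_mono) (auto simp: algebra_simps)
    finally show ?thesis .
  qed
  have U: "1 / N (matrix_inv (Ad i)) - tp * N (C (i - 1)) - om * N (B i) > 0 \<longrightarrow>
                  N (Z i i) \<le> N (mat 1) / (1 / N (matrix_inv (Ad i)) - tp * N (C (i - 1)) - om * N (B i))"
    using aux_up[OF NAi up] by (simp add: diff_diff_eq)
  show ?thesis unfolding Let_def tp_def[symmetric] om_def[symmetric] using L U by blast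
qed

end

theorem theorem2p7:
  fixes N :: "'m::finite cmat \<Rightarrow> real"
    and n :: nat
    and Ad B C :: "nat \<Rightarrow> 'm cmat"
    and Z :: "nat \<Rightarrow> nat \<Rightarrow> 'm cmat"
  assumes norm: "submult_matrix_norm N"
    and n2: "n \<ge> 2"
    and C0: "C 0 = 0" and Bn: "B n = 0"
    and Zinv: "is_block_inverse n (tridiag_block Ad B C) Z"
    and BC_inv: "\<And>i. 1 \<le> i \<Longrightarrow> i \<le> n - 1 \<Longrightarrow> invertible (B i) \<and> invertible (C i)"
    and A_inv: "\<And>i. 1 \<le> i \<Longrightarrow> i \<le> n \<Longrightarrow> invertible (Ad i)"
    and dd: "\<And>i. 1 \<le> i \<Longrightarrow> i \<le> n \<Longrightarrow>
               N (matrix_inv (Ad i) ** C (i - 1)) + N (matrix_inv (Ad i) ** B i) \<le> 1"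
    and first: "N (matrix_inv (Ad 1) ** B 1) < 1"
    and last: "N (matrix_inv (Ad n) ** C (n - 1)) < 1"
    and t: "1 \<le> t" "t \<le> n - 1"
  shows "(\<forall>i j. 1 \<le> i \<and> i < j \<and> j \<le> n \<longrightarrow>
            N (Z i j) \<le> N (Z j j) * (\<Prod>k=i..j-1. tau_it N Ad B C k t))
       \<and> (\<forall>i j. 1 \<le> j \<and> j < i \<and> i \<le> n \<longrightarrow>
            N (Z i j) \<le> N (Z j j) * (\<Prod>k=j+1..i. omega_it n N Ad B C k t))
       \<and> (\<forall>i. 1 \<le> i \<and> i \<le> n \<longrightarrow>
            (let tp = (if i = 1 then 0 else tau_it N Ad B C (i - 1) t);
                 om = (if i = n then 0 else omega_it n N Ad B C (i + 1) t)
             in N (mat 1) / (N (Ad i) + tp * N (C (i - 1)) + om * N (B i)) \<le> N (Z i i)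
              \<and> (1 / N (matrix_inv (Ad i)) - tp * N (C (i - 1)) - om * N (B i) > 0 \<longrightarrow>
                  N (Z i i) \<le> N (mat 1) /
                     (1 / N (matrix_inv (Ad i)) - tp * N (C (i - 1)) - om * N (B i)))))"
proof -
  interpret tri N n Ad B C Z
    using norm n2 C0 Bn Zinv BC_inv A_inv dd first last by unfold_locales auto
  show ?thesis
    using prod_up[OF t(1)] prod_down[OF t] diag_bounds[OF t] by blast
qed

end
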